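(* The function $$\mathcal{L}(\boldsymbol{U},\boldsymbol{V})=\frac1n\sum_{i=1}^n\big(\langle\boldsymbol{P}_i,\boldsymbol{U}\boldsymbol{U}^\top-\boldsymbol{V}\boldsymbol{V}^\top\rangle-y_i^*\big)^2+\frac\lambda2\,\mathrm{tr}(\boldsymbol{U}\boldsymbol{U}^\top+\boldsymbol{V}\boldsymbol{V}^\top),\qquad \boldsymbol{U},\boldsymbol{V}\in\mathbb{R}^{d\times d},$$ satisfies: (1) all local minima of $\mathcal{L}$ are global minima; (2) at any saddle point $(\boldsymbol{U}_s,\boldsymbol{V}_s)$ of $\mathcal{L}$ there is a direction $(\boldsymbol{\mathcal{E}}_{\boldsymbol{U}},\boldsymbol{\mathcal{E}}_{\boldsymbol{V}})$ with $\mathrm{vec}(\boldsymbol{\mathcal{E}}_{\boldsymbol{U}},\boldsymbol{\mathcal{E}}_{\boldsymbol{V}})^\top\nabla^2\mathcal{L}(\boldsymbol{U}_s,\boldsymbol{V}_s)\,\mathrm{vec}(\boldsymbol{\mathcal{E}}_{\boldsymbol{U}},\boldsymbol{\mathcal{E}}_{\boldsymbol{V}})<0$.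
   Context: $\lambda>0$. Observed index pairs $(i_k,j_k)\in[d]\times[d]$, $k\in[n]$, with $\boldsymbol{P}_k:=\frac12(\boldsymbol{e}_{i_k}\boldsymbol{e}_{j_k}^\top+\boldsymbol{e}_{j_k}\boldsymbol{e}_{i_k}^\top)$, and targets $y_k^*\in\mathbb{R}$ (the observed entries of a symmetric matrix). A saddle point is a stationary point that is not a local extremum. *)

theory Defs
  imports "HOL-Analysis.Analysis"
begin

definition outer :: "real^'d \<Rightarrow> real^'d \<Rightarrow> real^'d^'d" where
  "outer u v = (\<chi> a b. u $ a * v $ b)"

definition Pmat :: "'d::finite \<Rightarrow> 'd \<Rightarrow> real^'d^'d" where
  "Pmat i j = (1/2) *\<^sub>R (outer (axis i 1) (axis j 1) + outer (axis j 1) (axis i 1))"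

definition frob :: "real^'d^'d \<Rightarrow> real^'d^'d \<Rightarrow> real" where
  "frob A B = trace (transpose A ** B)"

definition lossL :: "nat \<Rightarrow> (nat \<Rightarrow> 'd::finite) \<Rightarrow> (nat \<Rightarrow> 'd) \<Rightarrow> (nat \<Rightarrow> real) \<Rightarrow> real
      \<Rightarrow> (real^'d^'d) \<times> (real^'d^'d) \<Rightarrow> real" where
  "lossL n ii jj y lam UV =
     (let U = fst UV; V = snd UV in
       (1 / real n) * (\<Sum>k<n. (frob (Pmat (ii k) (jj k)) (U ** transpose U - V ** transpose V) - y k)^2)
       + (lam / 2) * trace (U ** transpose U + V ** transpose V))"

definition is_local_min :: "('a::metric_space \<Rightarrow> real) \<Rightarrow> 'a \<Rightarrow> bool" where
  "is_local_min f x \<longleftrightarrow> (\<exists>e>0. \<forall>y. dist y x < e \<longrightarrow> f x \<le> f y)"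

definition is_local_max :: "('a::metric_space \<Rightarrow> real) \<Rightarrow> 'a \<Rightarrow> bool" where
  "is_local_max f x \<longleftrightarrow> (\<exists>e>0. \<forall>y. dist y x < e \<longrightarrow> f y \<le> f x)"

definition is_global_min :: "('a \<Rightarrow> real) \<Rightarrow> 'a \<Rightarrow> bool" where
  "is_global_min f x \<longleftrightarrow> (\<forall>y. f x \<le> f y)"

definition is_stationary :: "('a::real_normed_vector \<Rightarrow> real) \<Rightarrow> 'a \<Rightarrow> bool" where
  "is_stationary f x \<longleftrightarrow> (f has_derivative (\<lambda>h. 0)) (at x)"

definition is_saddle :: "('a::real_normed_vector \<Rightarrow> real) \<Rightarrow> 'a \<Rightarrow> bool" where
  "is_saddle f x \<longleftrightarrow> is_stationary f x \<and> \<not> is_local_min f x \<and> \<not> is_local_max f x"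

text \<open>Hessian quadratic form h^T (nabla^2 f)(x) h, i.e. the second Frechet derivative
  D^2 f(x)[h,h], obtained by differentiating y \<mapsto> Df(y)[h] at x in direction h.\<close>
definition hess_quad :: "('a::real_normed_vector \<Rightarrow> real) \<Rightarrow> 'a \<Rightarrow> 'a \<Rightarrow> real" where
  "hess_quad f x h = frechet_derivative (\<lambda>y. frechet_derivative f (at y) h) (at x) h"

end

theory Submission imports Defs begin

lemma bilinear_mm: "bilinear (\<lambda>(A::real^'m^'n) (B::real^'k^'m). A ** B)"
  unfolding bilinear_def linear_iff
  by (auto simp: vec_eq_iff matrix_matrix_mult_def sum.distrib algebra_simps sum_distrib_left)

lemma bb_mm: "bounded_bilinear (\<lambda>(A::real^'m^'n) (B::real^'k^'m). A ** B)"
  using bilinear_mm bilinear_conv_bounded_bilinear by blast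

lemma bl_transpose: "bounded_linear (transpose :: real^'m^'n \<Rightarrow> real^'n^'m)"
  unfolding linear_conv_bounded_linear[symmetric] linear_iff
  by (auto simp: vec_eq_iff transpose_def)

lemma frob_inner: "frob A B = A \<bullet> (B::real^'d^'d)"
  by (simp add: frob_def trace_def inner_vec_def matrix_matrix_mult_def transpose_def sum_distrib_left)
     (rule sum.swap)

lemma trace_UUt: "trace (U ** transpose U) = U \<bullet> (U::real^'d^'d)"
  by (simp add: trace_def inner_vec_def matrix_matrix_mult_def transpose_def power2_eq_square)


locale LS =
  fixes n :: nat and ii jj :: "nat \<Rightarrow> 'd::finite" and y :: "nat \<Rightarrow> real" and lam :: real
begin

abbreviation P where "P k \<equiv> Pmat (ii k) (jj k)"

definition Xf :: "(real^'d^'d) \<times> (real^'d^'d) \<Rightarrow> real^'d^'d" where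
  "Xf z = fst z ** transpose (fst z) - snd z ** transpose (snd z)"
definition r where "r z k = P k \<bullet> Xf z - y k"
definition g where "g z M = (2 / real n) * (\<Sum>k<n. r z k * (P k \<bullet> M))"
definition dX :: "(real^'d^'d) \<times> (real^'d^'d) \<Rightarrow> (real^'d^'d) \<times> (real^'d^'d) \<Rightarrow> real^'d^'d" where
  "dX z h = fst z ** transpose (fst h) + fst h ** transpose (fst z)
     - (snd z ** transpose (snd h) + snd h ** transpose (snd z))"
definition DL where "DL z h = g z (dX z h) + lam * (fst z \<bullet> fst h + snd z \<bullet> snd h)"
definition D2 where "D2 x h q = (2/real n) * (\<Sum>k<n. (P k \<bullet> dX x q) * (P k \<bullet> dX x h))
   + g x (dX q h) + lam * (fst q \<bullet> fst h + snd q \<bullet> snd h)"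
definition Lf where "Lf z = (1/real n) * (\<Sum>k<n. (r z k)^2) + (lam/2) * (fst z \<bullet> fst z + snd z \<bullet> snd z)"

lemma L_eq: "lossL n ii jj y lam = Lf"
  by (rule ext) (simp add: lossL_def Lf_def r_def Xf_def frob_inner trace_add trace_UUt Let_def)

lemmas mm_deriv = bounded_bilinear.FDERIV[OF bb_mm]
lemmas tr_deriv = bounded_linear.has_derivative[OF bl_transpose]

lemma Xf_deriv: "(Xf has_derivative dX z) (at z)"
  unfolding Xf_def[abs_def]
  apply (rule has_derivative_eq_rhs)
   apply ((rule derivative_intros mm_deriv tr_deriv)+)[1]
  apply (auto simp: dX_def fun_eq_iff)
  done

lemma r_deriv: "((\<lambda>z. r z k) has_derivative (\<lambda>h. P k \<bullet> dX z h)) (at z)"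
  unfolding r_def[abs_def]
  apply (rule has_derivative_eq_rhs)
   apply ((rule derivative_intros Xf_deriv)+)[1]
  apply (auto simp: fun_eq_iff)
  done

lemma L_deriv: "(Lf has_derivative DL z) (at z)"
  unfolding Lf_def[abs_def] power2_eq_square
  apply (rule has_derivative_eq_rhs)
   apply ((rule derivative_intros r_deriv)+)[1]
  apply (auto simp: fun_eq_iff DL_def g_def sum_distrib_left sum.distrib algebra_simps inner_commute)
  done

lemma dX_deriv: "((\<lambda>z. dX z h) has_derivative (\<lambda>q. dX q h)) (at x)"
  unfolding dX_def[abs_def]
  apply (rule has_derivative_eq_rhs)
   apply ((rule derivative_intros mm_deriv tr_deriv)+)[1]
  apply (auto simp: fun_eq_iff)
  done

lemma DL_deriv: "((\<lambda>z. DL z h) has_derivative D2 x h) (at x)"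
  unfolding DL_def[abs_def] g_def
  apply (rule has_derivative_eq_rhs)
   apply ((rule derivative_intros r_deriv dX_deriv)+)[1]
  apply (auto simp: fun_eq_iff D2_def g_def sum_distrib_left sum.distrib algebra_simps inner_commute)
  done

lemma hess_eq: "hess_quad Lf x h = D2 x h h"
proof -
  have "(\<lambda>y. frechet_derivative Lf (at y) h) = (\<lambda>y. DL y h)"
    using frechet_derivative_at[OF L_deriv] by metis
  then show ?thesis
    unfolding hess_quad_def using frechet_derivative_at[OF DL_deriv] by metis
qed

end

lemma outer_mm1: "(U::real^'d^'d) ** transpose (outer v e) = outer (U *v e) v"
  by (simp add: vec_eq_iff matrix_matrix_mult_def transpose_def outer_def matrix_vector_mult_def sum_distrib_left algebra_simps)

lemma outer_mm2: "outer v e ** transpose (U::real^'d^'d) = outer v (U *v e)"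
  by (simp add: vec_eq_iff matrix_matrix_mult_def transpose_def outer_def matrix_vector_mult_def sum_distrib_left algebra_simps)

lemma outer_inner: "(U::real^'d^'d) \<bullet> outer v e = (U *v e) \<bullet> v"
  by (simp add: inner_vec_def outer_def matrix_vector_mult_def sum_distrib_right sum_distrib_left algebra_simps)

lemma outer_mm3: "outer w a ** transpose (outer w a) = (a \<bullet> a) *\<^sub>R outer w (w::real^'d)"
  by (simp add: vec_eq_iff matrix_matrix_mult_def transpose_def outer_def inner_vec_def sum_distrib_left sum_distrib_right algebra_simps)

lemma outer_inner2: "outer w a \<bullet> outer w a = (a \<bullet> a) * (w \<bullet> (w::real^'d))"
  by (simp add: inner_vec_def outer_def sum_distrib_left sum_distrib_right algebra_simps)

lemma outer_zero[simp]: "outer 0 w = 0" "outer w 0 = 0"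
  by (simp_all add: outer_def vec_eq_iff)

lemma mm_cols: "(M::real^'d^'d) ** transpose M = (\<Sum>j\<in>UNIV. outer (column j M) (column j M))"
  by (simp add: vec_eq_iff matrix_matrix_mult_def transpose_def outer_def column_def)

lemma inner_cols: "(M::real^'d^'d) \<bullet> M = (\<Sum>j\<in>UNIV. column j M \<bullet> column j M)"
  by (simp add: inner_vec_def column_def) (rule sum.swap)


context LS begin

lemma g_add: "g z (A + B) = g z A + g z B"
  by (simp add: g_def inner_add_right sum.distrib algebra_simps)
lemma g_diff: "g z (A - B) = g z A - g z B"
  by (simp add: g_def inner_diff_right sum_subtractf algebra_simps)
lemma g_scale: "g z (c *\<^sub>R A) = c * g z A"
  by (simp add: g_def sum_distrib_left algebra_simps)
lemma g_zero: "g z 0 = 0"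
  by (simp add: g_def)
lemma g_sum: "finite S \<Longrightarrow> g z (\<Sum>j\<in>S. A j) = (\<Sum>j\<in>S. g z (A j))"
  by (induct S rule: finite_induct) (simp_all add: g_zero g_add)

lemma stat_DL: "is_stationary Lf z \<Longrightarrow> DL z h = 0"
  unfolding is_stationary_def using has_derivative_unique[OF L_deriv] by metis

lemma Xf_shift: "Xf (z + t *\<^sub>R h) = Xf z + t *\<^sub>R dX z h + t^2 *\<^sub>R Xf h"
  by (simp add: Xf_def dX_def vec_eq_iff matrix_matrix_mult_def transpose_def sum.distrib
      sum_distrib_left algebra_simps power2_eq_square sum_subtractf)

lemma dX_self: "dX h h = 2 *\<^sub>R Xf h"
  by (simp add: Xf_def dX_def algebra_simps scaleR_2)

end

context LS begin

definition K where "K h = (1/real n) * (\<Sum>k<n. (P k \<bullet> Xf h)^2)"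

lemma K_nonneg: "K h \<ge> 0"
  by (simp add: K_def sum_nonneg)

lemma curve:
  assumes st: "is_stationary Lf z" and dz: "dX z h = 0" and lp: "lam > 0"
  shows "Lf (z + t *\<^sub>R h) = Lf z + t^2/2 * D2 z h h + t^4 * K h"
proof -
  have "DL z h = 0" using stat_DL[OF st] .
  hence lin: "fst z \<bullet> fst h + snd z \<bullet> snd h = 0"
    using lp by (simp add: DL_def dz g_zero)
  have rr: "r (z + t *\<^sub>R h) k = r z k + t^2 * (P k \<bullet> Xf h)" for k
    by (simp add: r_def Xf_shift dz inner_add_right)
  have D2e: "D2 z h h = (4/real n) * (\<Sum>k<n. r z k * (P k \<bullet> Xf h)) + lam * (fst h \<bullet> fst h + snd h \<bullet> snd h)"
    by (simp add: D2_def dz dX_self g_scale g_def sum_distrib_left algebra_simps)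
  have i1: "fst (z + t *\<^sub>R h) \<bullet> fst (z + t *\<^sub>R h) + snd (z + t *\<^sub>R h) \<bullet> snd (z + t *\<^sub>R h)
      = (fst z \<bullet> fst z + snd z \<bullet> snd z) + 2 * t * (fst z \<bullet> fst h + snd z \<bullet> snd h)
        + t^2 * (fst h \<bullet> fst h + snd h \<bullet> snd h)"
    by (simp add: inner_add_left inner_add_right inner_commute algebra_simps power2_eq_square)
  have s1: "(\<Sum>k<n. (r z k + t^2 * (P k \<bullet> Xf h))^2) = (\<Sum>k<n. (r z k)^2)
       + 2 * t^2 * (\<Sum>k<n. r z k * (P k \<bullet> Xf h)) + t^4 * (\<Sum>k<n. (P k \<bullet> Xf h)^2)"
    by (simp add: power2_sum sum.distrib sum_distrib_left algebra_simps power2_eq_square power4_eq_xxxx)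
  show ?thesis
    unfolding Lf_def[of "z + t *\<^sub>R h"] rr s1 i1 lin D2e K_def
    by (simp add: Lf_def algebra_simps power2_eq_square power4_eq_xxxx)
qed

lemma not_min:
  assumes st: "is_stationary Lf z" and dz: "dX z h = 0" and lp: "lam > 0" and neg: "D2 z h h < 0"
  shows "\<not> is_local_min Lf z"
proof
  assume "is_local_min Lf z"
  then obtain e where e: "e > 0" "\<And>w. dist w z < e \<Longrightarrow> Lf z \<le> Lf w"
    unfolding is_local_min_def by blast
  define \<alpha> where "\<alpha> = D2 z h h / 2"
  define \<beta> where "\<beta> = K h"
  have a: "\<alpha> < 0" using neg by (simp add: \<alpha>_def)
  have b: "\<beta> \<ge> 0" by (simp add: \<beta>_def K_nonneg)
  define s where "s = min (-\<alpha>/(\<beta>+1)) ((e/(2*(norm h+1)))^2)"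
  have "\<alpha>/(\<beta>+1) < 0" using a b by (simp add: divide_neg_pos)
  moreover have "2 * norm h + 2 \<noteq> 0" by (smt (verit) norm_ge_zero)
  ultimately have s0: "s > 0" using a b e by (simp add: s_def)
  define t where "t = sqrt s"
  have t0: "t > 0" using s0 by (simp add: t_def)
  have ts: "t^2 = s" using s0 by (simp add: t_def)
  have "t \<le> sqrt ((e/(2*(norm h+1)))^2)" unfolding t_def s_def by (intro real_sqrt_le_mono) simp
  also have "\<dots> = e/(2*(norm h+1))" using e by simp
  finally have te: "t \<le> e/(2*(norm h+1))" .
  have "t * norm h \<le> e/(2*(norm h+1)) * norm h"
    using te by (intro mult_right_mono) simp_all
  also have "\<dots> < e"
  proof -
    have "e/(2*(norm h+1)) * norm h = e * (norm h / (2*(norm h+1)))" by simp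
    also have "\<dots> < e * 1"
      using e by (intro mult_strict_left_mono) (simp_all add: divide_less_eq, smt (verit) norm_ge_zero)
    finally show ?thesis by simp
  qed
  finally have "dist (z + t *\<^sub>R h) z < e" using t0 by (simp add: dist_norm)
  hence le: "Lf z \<le> Lf (z + t *\<^sub>R h)" by (rule e(2))
  have bs: "\<beta> * s < -\<alpha>"
  proof -
    have "\<beta> * s \<le> \<beta> * (-\<alpha>/(\<beta>+1))" using b by (intro mult_left_mono) (simp_all add: s_def)
    also have "\<dots> < -\<alpha>" using a b by (simp add: field_simps)
    finally show ?thesis .
  qed
  have "t^2/2 * D2 z h h + t^4 * K h = s * (\<alpha> + \<beta> * s)"
    by (simp add: \<alpha>_def \<beta>_def ts power4_eq_xxxx flip: ts) (simp add: power2_eq_square algebra_simps)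
  also have "\<dots> < 0" using s0 bs by (simp add: mult_pos_neg)
  finally show False using le curve[OF st dz lp, of t] by simp
qed

end

context LS begin

definition phiU where "phiU z w = 2 * g z (outer w w) + lam * (w \<bullet> w)"
definition phiV where "phiV z w = - 2 * g z (outer w w) + lam * (w \<bullet> w)"

lemma transpose_zero: "transpose (0::real^'d^'d) = 0"
  by (simp add: transpose_def vec_eq_iff)

lemma g_neg: "g z (- A) = - g z A"
  using g_diff[of z 0 A] by (simp add: g_zero)

lemma g_two: "g z (2 * A) = 2 * g z A"
proof -
  have e: "2 * A = A + A" by (simp add: vec_eq_iff)
  show ?thesis unfolding e g_add by simp
qed

lemma g_two': "g z (A * 2) = 2 * g z A"
  using g_two[of z A] by (simp add: mult.commute)

lemma DL_U: "DL z (outer v e, 0) = g z (outer (fst z *v e) v + outer v (fst z *v e)) + lam * ((fst z *v e) \<bullet> v)"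
  by (simp add: DL_def dX_def outer_mm1 outer_mm2 outer_inner transpose_zero)

lemma DL_V: "DL z (0, outer v e) = - g z (outer (snd z *v e) v + outer v (snd z *v e)) + lam * ((snd z *v e) \<bullet> v)"
  by (simp add: DL_def dX_def outer_mm1 outer_mm2 outer_inner transpose_zero g_diff g_zero g_neg g_add)

lemma ker_of:
  assumes "\<And>e. (A::real^'d^'d) *v e = w \<Longrightarrow> False"
  shows "\<exists>a. a \<noteq> 0 \<and> A *v a = 0"
proof (rule ccontr)
  assume "\<not> ?thesis"
  hence k: "A *v a = 0 \<Longrightarrow> a = 0" for a by blast
  have "inj (\<lambda>x. A *v x)"
  proof (rule injI)
    fix x1 x2 assume "A *v x1 = A *v x2"
    hence "A *v (x1 - x2) = 0" by (simp add: matrix_vector_mult_diff_distrib)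
    thus "x1 = x2" using k[of "x1 - x2"] by simp
  qed
  hence "surj (\<lambda>x. A *v x)" using linear_inj_imp_surj[OF matrix_vector_mul_linear] by blast
  then obtain e where "A *v e = w" by (metis surjD)
  thus False using assms by blast
qed

lemma kerU:
  assumes st: "is_stationary Lf z" and neg: "phiU z w < 0"
  shows "\<exists>a. a \<noteq> 0 \<and> fst z *v a = 0"
proof (rule ker_of[of _ w])
  fix e assume e: "fst z *v e = w"
  have "DL z (outer w e, 0) = 0" by (rule stat_DL[OF st])
  hence "phiU z w = 0" using e by (simp add: DL_U phiU_def g_add g_two)
  thus False using neg by simp
qed

lemma kerV:
  assumes st: "is_stationary Lf z" and neg: "phiV z w < 0"
  shows "\<exists>a. a \<noteq> 0 \<and> snd z *v a = 0"
proof (rule ker_of[of _ w])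
  fix e assume e: "snd z *v e = w"
  have "DL z (0, outer w e) = 0" by (rule stat_DL[OF st])
  hence "phiV z w = 0" using e by (simp add: DL_V phiV_def g_add g_two)
  thus False using neg by simp
qed

lemma dirU:
  assumes "fst z *v a = 0"
  shows "dX z (outer w a, 0) = 0" "D2 z (outer w a, 0) (outer w a, 0) = (a \<bullet> a) * phiU z w"
proof -
  show d: "dX z (outer w a, 0) = 0"
    using assms by (simp add: dX_def outer_mm1 outer_mm2 transpose_zero)
  show "D2 z (outer w a, 0) (outer w a, 0) = (a \<bullet> a) * phiU z w"
    unfolding D2_def d by (simp add: dX_def outer_mm3 g_two g_two' g_neg transpose_zero g_add g_scale outer_inner2 phiU_def algebra_simps)
qed

lemma dirV:
  assumes "snd z *v a = 0"
  shows "dX z (0, outer w a) = 0" "D2 z (0, outer w a) (0, outer w a) = (a \<bullet> a) * phiV z w"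
proof -
  show d: "dX z (0, outer w a) = 0"
    using assms by (simp add: dX_def outer_mm1 outer_mm2 transpose_zero)
  show "D2 z (0, outer w a) (0, outer w a) = (a \<bullet> a) * phiV z w"
    unfolding D2_def d by (simp add: dX_def outer_mm3 g_two g_two' g_neg transpose_zero g_add g_scale g_diff g_zero outer_inner2 phiV_def algebra_simps)
qed

lemma bad_dir:
  assumes st: "is_stationary Lf z" and neg: "phiU z w < 0 \<or> phiV z w < 0"
  shows "\<exists>h. dX z h = 0 \<and> D2 z h h < 0"
  using neg
proof
  assume n: "phiU z w < 0"
  obtain a where a: "a \<noteq> 0" "fst z *v a = 0" using kerU[OF st n] by blast
  have "(a \<bullet> a) * phiU z w < 0" using a n by (simp add: mult_pos_neg)
  thus ?thesis using dirU[OF a(2)] by metis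
next
  assume n: "phiV z w < 0"
  obtain a where a: "a \<noteq> 0" "snd z *v a = 0" using kerV[OF st n] by blast
  have "(a \<bullet> a) * phiV z w < 0" using a n by (simp add: mult_pos_neg)
  thus ?thesis using dirV[OF a(2)] by metis
qed

end

context LS begin

lemma cols_U: "2 * g z ((M::real^'d^'d) ** transpose M) + lam * (M \<bullet> M) = (\<Sum>j\<in>UNIV. phiU z (column j M))"
  unfolding mm_cols inner_cols[of M] by (simp add: g_sum phiU_def sum.distrib sum_distrib_left)

lemma cols_V: "- 2 * g z ((M::real^'d^'d) ** transpose M) + lam * (M \<bullet> M) = (\<Sum>j\<in>UNIV. phiV z (column j M))"
  unfolding mm_cols inner_cols[of M] by (simp add: g_sum phiV_def sum.distrib sum_distrib_left sum_negf sum_subtractf)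

lemma global:
  assumes st: "is_stationary Lf z" and pU: "\<And>w. phiU z w \<ge> 0" and pV: "\<And>w. phiV z w \<ge> 0"
  shows "Lf z \<le> Lf z'"
proof -
  have "DL z z = 0" by (rule stat_DL[OF st])
  hence reg: "lam * (fst z \<bullet> fst z + snd z \<bullet> snd z) = - 2 * g z (Xf z)"
    by (simp add: DL_def dX_self g_scale)
  have Lz: "Lf z = (1/real n) * (\<Sum>k<n. (r z k)^2) - g z (Xf z)"
    unfolding Lf_def using reg by (simp add: algebra_simps)
  have sq: "(r z' k)^2 \<ge> (r z k)^2 + 2 * r z k * (P k \<bullet> Xf z' - P k \<bullet> Xf z)" for k
  proof -
    have "r z' k = r z k + (P k \<bullet> Xf z' - P k \<bullet> Xf z)" by (simp add: r_def)
    moreover have "(a + b)^2 \<ge> a^2 + 2 * a * b" for a b :: real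
      by (simp add: power2_eq_square algebra_simps)
    ultimately show ?thesis by metis
  qed
  have s1: "(\<Sum>k<n. (r z' k)^2) \<ge> (\<Sum>k<n. (r z k)^2) + (\<Sum>k<n. 2 * r z k * (P k \<bullet> Xf z' - P k \<bullet> Xf z))"
    unfolding sum.distrib[symmetric] by (rule sum_mono) (rule sq)
  have s2: "(1/real n) * (\<Sum>k<n. (r z' k)^2) \<ge> (1/real n) * (\<Sum>k<n. (r z k)^2) + (g z (Xf z') - g z (Xf z))"
  proof -
    have "(1/real n) * (\<Sum>k<n. 2 * r z k * (P k \<bullet> Xf z' - P k \<bullet> Xf z)) = g z (Xf z') - g z (Xf z)"
      by (simp add: g_def sum_distrib_left sum_subtractf algebra_simps)
    moreover have "(1/real n) * (\<Sum>k<n. (r z' k)^2) \<ge> (1/real n) * ((\<Sum>k<n. (r z k)^2) + (\<Sum>k<n. 2 * r z k * (P k \<bullet> Xf z' - P k \<bullet> Xf z)))"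
      using s1 by (intro mult_left_mono) simp_all
    ultimately show ?thesis by (simp add: algebra_simps)
  qed
  have cU: "2 * g z (fst z' ** transpose (fst z')) + lam * (fst z' \<bullet> fst z') \<ge> 0"
    unfolding cols_U by (intro sum_nonneg pU)
  have cV: "- 2 * g z (snd z' ** transpose (snd z')) + lam * (snd z' \<bullet> snd z') \<ge> 0"
    unfolding cols_V by (intro sum_nonneg pV)
  have "Lf z' = (1/real n) * (\<Sum>k<n. (r z' k)^2) + (lam/2) * (fst z' \<bullet> fst z' + snd z' \<bullet> snd z')"
    by (simp add: Lf_def)
  also have "\<dots> \<ge> (1/real n) * (\<Sum>k<n. (r z k)^2) - g z (Xf z)
        + (1/2) * (2 * g z (fst z' ** transpose (fst z')) + lam * (fst z' \<bullet> fst z'))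
        + (1/2) * (- 2 * g z (snd z' ** transpose (snd z')) + lam * (snd z' \<bullet> snd z'))"
    using s2 by (simp add: Xf_def g_diff algebra_simps)
  finally have F: "(1/real n) * (\<Sum>k<n. (r z k)^2) - g z (Xf z) + (1/2) * (2 * g z (fst z' ** transpose (fst z')) + lam * (fst z' \<bullet> fst z'))
        + (1/2) * (- 2 * g z (snd z' ** transpose (snd z')) + lam * (snd z' \<bullet> snd z')) \<le> Lf z'" .
  have h1: "(1/2) * (2 * g z (fst z' ** transpose (fst z')) + lam * (fst z' \<bullet> fst z')) \<ge> 0"
    using cU by simp
  have h2: "(1/2) * (- 2 * g z (snd z' ** transpose (snd z')) + lam * (snd z' \<bullet> snd z')) \<ge> 0"
    using cV by simp
  show ?thesis unfolding Lz using F h1 h2 by linarith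
qed

end

context LS begin

lemma min_stat: "is_local_min Lf z \<Longrightarrow> is_stationary Lf z"
proof -
  assume "is_local_min Lf z"
  then obtain e where e: "e > 0" "\<And>w. dist w z < e \<Longrightarrow> Lf z \<le> Lf w"
    unfolding is_local_min_def by blast
  have ev: "eventually (\<lambda>w. Lf z \<le> Lf w) (at z)"
    unfolding eventually_at using e by blast
  have "DL z = (\<lambda>h. 0)" by (rule has_derivative_local_min[OF L_deriv ev])
  thus ?thesis unfolding is_stationary_def using L_deriv by metis
qed

lemma main1: assumes lp: "lam > 0" and m: "is_local_min Lf z" shows "is_global_min Lf z"
proof -
  have st: "is_stationary Lf z" by (rule min_stat[OF m])
  have "\<forall>w. phiU z w \<ge> 0 \<and> phiV z w \<ge> 0"
  proof (rule ccontr)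
    assume "\<not> ?thesis"
    then obtain w where "phiU z w < 0 \<or> phiV z w < 0" using not_le by blast
    then obtain h where "dX z h = 0" "D2 z h h < 0" using bad_dir[OF st] by blast
    thus False using not_min[OF st _ lp] m by blast
  qed
  thus ?thesis unfolding is_global_min_def using global[OF st] by blast
qed

lemma main2: assumes s: "is_saddle Lf z" shows "\<exists>h. hess_quad Lf z h < 0"
proof -
  have st: "is_stationary Lf z" and nm: "\<not> is_local_min Lf z" using s by (auto simp: is_saddle_def)
  have "\<not> (\<forall>w. phiU z w \<ge> 0 \<and> phiV z w \<ge> 0)"
  proof
    assume "\<forall>w. phiU z w \<ge> 0 \<and> phiV z w \<ge> 0"
    hence "\<forall>z'. Lf z \<le> Lf z'" using global[OF st] by blast
    hence "is_local_min Lf z" unfolding is_local_min_def by (metis zero_less_one)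
    thus False using nm by blast
  qed
  then obtain w where "phiU z w < 0 \<or> phiV z w < 0" using not_le by blast
  then obtain h where "D2 z h h < 0" using bad_dir[OF st] by blast
  thus ?thesis using hess_eq by metis
qed

end

theorem theoremF1:
  fixes n :: nat and ii jj :: "nat \<Rightarrow> 'd::finite" and y :: "nat \<Rightarrow> real" and lam :: real
  assumes "lam > 0"
  shows "(\<forall>UV. is_local_min (lossL n ii jj y lam) UV \<longrightarrow> is_global_min (lossL n ii jj y lam) UV)
       \<and> (\<forall>UVs. is_saddle (lossL n ii jj y lam) UVs \<longrightarrow>
             (\<exists>E :: (real^'d^'d) \<times> (real^'d^'d). hess_quad (lossL n ii jj y lam) UVs E < 0))"
proof -
  interpret LS n ii jj y lam .
  show ?thesis unfolding L_eq using main1[OF assms] main2 by blast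
qed

end
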